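(* Let $\theta=\pi/30$, let $$u=(u_1,\dots,u_8)=\Big(2\sin\theta,\ 2\sin 2\theta,\ 2\sin 3\theta,\ 2\sin 4\theta,\ 2\sin 5\theta,\ \frac{\sin 2\theta}{\sin 3\theta},\ \frac{\sin\theta}{\sin 3\theta},\ \frac{\sin\theta}{\sin 2\theta}\Big),$$ and let $M=2\sqrt3\,\dfrac{\sin 6\theta}{\sin\theta}$. Let $$P_1(x)=x^4-30x^3+240x^2-720x+720,\qquad P_2(x)=x^4-30x^3+300x^2-1080x+720 .$$ Then the roots of $P_1$ are $M u_j^2$ for $j\in\{2,5,7,8\}$ and the roots of $P_2$ are $M u_j^2$ for $j\in\{1,3,4,6\}$. Consequently the eight roots of $P=P_1P_2=x^8-60x^7+1440x^6-18000x^5+127440x^4-518400x^3+1166400x^2-1296000x+518400$ are exactly $M u_j^2$, $j=1,\dots,8$.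
   Context: In the application, $P$ is the characteristic polynomial of the mass-squared matrix $B_{ab}=\sum_{j=0}^{8} n_j\alpha_j^a\alpha_j^b$ of the $E_8$ affine Toda field theory (with $n_0=1$, $\alpha_0=-\delta$ minus the highest root, and $n_j$ the coefficients of the highest root), so the roots $M u_j^2$ are the squared masses $m_j^2$; the vector $u$ is the Perron–Frobenius eigenvector of $2I-C$ for the $E_8$ Cartan matrix $C$ (simple roots $\alpha_1,\dots,\alpha_7$ in a chain, $\alpha_8$ attached to $\alpha_5$). *)

theory Defs
  imports "HOL-Computational_Algebra.Polynomial" Complex_Main
begin

definition e8_theta :: real where "e8_theta = pi / 30"

definition e8_u :: "nat \<Rightarrow> real" where
  "e8_u j = (if j = 1 then 2 * sin e8_theta
        else if j = 2 then 2 * sin (2 * e8_theta)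
        else if j = 3 then 2 * sin (3 * e8_theta)
        else if j = 4 then 2 * sin (4 * e8_theta)
        else if j = 5 then 2 * sin (5 * e8_theta)
        else if j = 6 then sin (2 * e8_theta) / sin (3 * e8_theta)
        else if j = 7 then sin e8_theta / sin (3 * e8_theta)
        else if j = 8 then sin e8_theta / sin (2 * e8_theta)
        else 0)"

definition e8_M :: real where
  "e8_M = 2 * sqrt 3 * sin (6 * e8_theta) / sin e8_theta"

definition e8_P1 :: "real poly" where
  "e8_P1 = [:720, -720, 240, -30, 1:]"

definition e8_P2 :: "real poly" where
  "e8_P2 = [:720, -1080, 300, -30, 1:]"

definition e8_P :: "real poly" where
  "e8_P = [:518400, -1296000, 1166400, -518400, 127440, -18000, 1440, -60, 1:]"

end

theory Submission
  imports Defs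
begin

lemma sin_rec: "sin ((a::real) + x) = 2 * cos x * sin a - sin (a - x)"
  by (simp add: sin_add sin_diff)

lemma cos_rec: "cos ((a::real) + x) = 2 * cos x * cos a - cos (a - x)"
  by (simp add: cos_add cos_diff)

lemma prod4: "[:-a,1:]*([:-b,1:]*([:-c,1:]*[:-d,1:])) =
  [:a*b*c*d, -(a*b*c+a*b*d+a*c*d+b*c*d), a*b+a*c+a*d+b*c+b*d+c*d, -(a+b+c+d), (1::real):]"
  by (simp add: algebra_simps)

lemma key:
  defines "t \<equiv> 2 * cos e8_theta"
  shows "t^2 > 3"
    and "(t^2)^4 - 7*(t^2)^3 + 14*(t^2)^2 - 8*(t^2) + 1 = 0"
    and "e8_M = 2 * (t^5-5*t^3+5*t) * (t^5-4*t^3+3*t)"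
    and "(e8_u 1)^2 = 4 - t^2"
    and "(e8_u 2)^2 = (4 - t^2) * t^2"
    and "(e8_u 3)^2 = (4 - t^2) * (t^2-1)^2"
    and "(e8_u 4)^2 = (4 - t^2) * (t^3-2*t)^2"
    and "(e8_u 5)^2 = (4 - t^2) * (t^4-3*t^2+1)^2"
    and "e8_u 6 = t / (t^2-1)"
    and "e8_u 7 = 1 / (t^2-1)"
    and "e8_u 8 = 1 / t"
proof -
  define th where "th = e8_theta"
  define s where "s = sin th"
  define c where "c = cos th"
  have tc: "t = 2*c" unfolding t_def c_def th_def by simp
  have th: "th = pi/30" unfolding th_def e8_theta_def by simp
  have spos: "s > 0" unfolding s_def th using pi_gt_zero by (intro sin_gt_zero) auto
  have s2c2: "s^2 = 1 - c^2" unfolding s_def c_def by (simp add: sin_squared_eq)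
  have S2: "sin (2*th) = s * (2*c)" unfolding s_def c_def by (simp add: sin_double)
  have C2: "cos (2*th) = 2*c^2 - 1" unfolding c_def by (simp add: cos_double_cos)
  have S3: "sin (3*th) = 2*c*sin(2*th) - s"
    using sin_rec[of "2*th" th] unfolding s_def c_def by (simp add: algebra_simps)
  have S4: "sin (4*th) = 2*c*sin(3*th) - sin(2*th)"
    using sin_rec[of "3*th" th] unfolding s_def c_def by (simp add: algebra_simps)
  have S5: "sin (5*th) = 2*c*sin(4*th) - sin(3*th)"
    using sin_rec[of "4*th" th] unfolding s_def c_def by (simp add: algebra_simps)
  have S6: "sin (6*th) = 2*c*sin(5*th) - sin(4*th)"
    using sin_rec[of "5*th" th] unfolding s_def c_def by (simp add: algebra_simps)
  have C3: "cos (3*th) = 2*c*cos(2*th) - c"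
    using cos_rec[of "2*th" th] unfolding c_def by (simp add: algebra_simps)
  have C4: "cos (4*th) = 2*c*cos(3*th) - cos(2*th)"
    using cos_rec[of "3*th" th] unfolding c_def by (simp add: algebra_simps)
  have C5: "cos (5*th) = 2*c*cos(4*th) - cos(3*th)"
    using cos_rec[of "4*th" th] unfolding c_def by (simp add: algebra_simps)
  have c5: "cos (5*th) = sqrt 3 / 2"
  proof -
    have "5*th = pi/6" using th by simp
    thus ?thesis by (metis cos_30)
  qed
  have sq3: "sqrt 3 = t^5-5*t^3+5*t"
    using c5 C5 C4 C3 C2 tc by algebra
  have S2': "sin (2*th) = s * t" using S2 tc by simp
  have S3': "sin (3*th) = s * (t^2-1)" using S3 S2' tc by algebra
  have S4': "sin (4*th) = s * (t^3-2*t)" using S4 S3' S2' tc by algebra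
  have S5': "sin (5*th) = s * (t^4-3*t^2+1)" using S5 S4' S3' tc by algebra
  have S6': "sin (6*th) = s * (t^5-4*t^3+3*t)" using S6 S5' S4' tc by algebra
  have s2: "(2*s)^2 = 4 - t^2" using s2c2 tc by (simp add: power_mult_distrib)
  have cgt: "c > sqrt 3 / 2"
  proof -
    have "cos (pi/6) < cos th" using th pi_gt_zero by (intro cos_monotone_0_pi) (auto simp: th)
    thus ?thesis by (simp add: cos_30 c_def)
  qed
  have tgt: "t > sqrt 3" using cgt tc by simp
  show t3: "t^2 > 3"
  proof -
    have "(sqrt 3)^2 < t^2" using tgt by (intro power_strict_mono) auto
    thus ?thesis by simp
  qed
  have "(t^5-5*t^3+5*t)^2 = 3" using sq3[symmetric] by simp
  moreover have "(t^2-3) * ((t^2)^4 - 7*(t^2)^3 + 14*(t^2)^2 - 8*(t^2) + 1) = (t ^ 5 - 5 * t ^ 3 + 5 * t)^2 - 3"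
    by (simp add: algebra_simps eval_nat_numeral)
  ultimately have "(t^2-3) * ((t^2)^4 - 7*(t^2)^3 + 14*(t^2)^2 - 8*(t^2) + 1) = 0"
    by simp
  thus "(t^2)^4 - 7*(t^2)^3 + 14*(t^2)^2 - 8*(t^2) + 1 = 0" using t3 by simp
  show "e8_M = 2 * (t^5-5*t^3+5*t) * (t^5-4*t^3+3*t)"
    unfolding e8_M_def th_def[symmetric] s_def[symmetric] using S6' spos sq3 by simp
  show "(e8_u 1)^2 = 4 - t^2"
    unfolding e8_u_def th_def[symmetric] s_def[symmetric] using s2 by simp
  have sq: "(2*(s*x))^2 = (4-t^2)*x^2" for x
  proof -
    have "(2*(s*x))^2 = (2*s)^2*x^2" by (simp add: power_mult_distrib)
    thus ?thesis using s2 by simp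
  qed
  show "(e8_u 2)^2 = (4 - t^2) * t^2"
    unfolding e8_u_def th_def[symmetric] S2' using sq by simp
  show "(e8_u 3)^2 = (4 - t^2) * (t^2-1)^2"
    unfolding e8_u_def th_def[symmetric] S3' using sq by simp
  show "(e8_u 4)^2 = (4 - t^2) * (t^3-2*t)^2"
    unfolding e8_u_def th_def[symmetric] S4' using sq by simp
  show "(e8_u 5)^2 = (4 - t^2) * (t^4-3*t^2+1)^2"
    unfolding e8_u_def th_def[symmetric] S5' using sq by simp
  show "e8_u 6 = t / (t^2-1)"
    unfolding e8_u_def th_def[symmetric] S2' S3' using spos by simp
  show "e8_u 7 = 1 / (t^2-1)"
    unfolding e8_u_def th_def[symmetric] S3' s_def[symmetric] using spos by simp
  show "e8_u 8 = 1 / t"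
    unfolding e8_u_def th_def[symmetric] S2' s_def[symmetric] using spos by simp
qed

lemma prod4':
  fixes a b c d :: real
  assumes "a*b*c*d = e4" "a*b*c+a*b*d+a*c*d+b*c*d = e3" "a*b+a*c+a*d+b*c+b*d+c*d = e2" "a+b+c+d = e1"
  shows "[:-a,1:]*([:-b,1:]*([:-c,1:]*[:-d,1:])) = [:e4, -e3, e2, -e1, 1:]"
  using prod4[of a b c d] assms by simp

theorem mainTheorem3:
  shows "e8_P1 = (\<Prod>j\<in>{2,5,7,8}. [:- (e8_M * (e8_u j)^2), 1:])
       \<and> e8_P2 = (\<Prod>j\<in>{1,3,4,6}. [:- (e8_M * (e8_u j)^2), 1:])
       \<and> e8_P = e8_P1 * e8_P2
       \<and> e8_P = (\<Prod>j\<in>{1..8}. [:- (e8_M * (e8_u j)^2), 1:])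
       \<and> {x. poly e8_P x = 0} = (\<lambda>j. e8_M * (e8_u j)^2) ` {1..8}"
proof -
  define t where "t = 2 * cos e8_theta"
  note k = key[folded t_def]
  have hm: "(1 - 8*t^2 + 14*t^4 - 7*t^6 + t^8) = 0"
    using k(2) by (simp add: power_mult[symmetric] algebra_simps)
  have nz1: "t^2 - 1 \<noteq> 0" using k(1) by simp
  have nz2: "t \<noteq> 0" using k(1) by auto
  have r1: "e8_M * (e8_u 1)^2 = (16 - 20*t^2 + 12*t^4 - 2*t^6)"
  proof -
    have "2 * (t^5-5*t^3+5*t) * (t^5-4*t^3+3*t) * (4 - t^2) - (16 - 20*t^2 + 12*t^4 - 2*t^6) = (-16 + 12*t^2 - 2*t^4) * (1 - 8*t^2 + 14*t^4 - 7*t^6 + t^8)" by (simp add: algebra_simps eval_nat_numeral)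
    thus ?thesis using hm k(3) k(4) by simp
  qed
  have r2: "e8_M * (e8_u 2)^2 = (2 + 8*t^4 - 2*t^6)"
  proof -
    have "2 * (t^5-5*t^3+5*t) * (t^5-4*t^3+3*t) * ((4 - t^2) * t^2) - (2 + 8*t^4 - 2*t^6) = (-2 - 16*t^2 + 12*t^4 - 2*t^6) * (1 - 8*t^2 + 14*t^4 - 7*t^6 + t^8)" by (simp add: algebra_simps eval_nat_numeral)
    thus ?thesis using hm k(3) k(5) by simp
  qed
  have r3: "e8_M * (e8_u 3)^2 = (14 - 34*t^2 + 24*t^4 - 4*t^6)"
  proof -
    have "2 * (t^5-5*t^3+5*t) * (t^5-4*t^3+3*t) * ((4 - t^2) * (t^2-1)^2) - (14 - 34*t^2 + 24*t^4 - 4*t^6) = (-14 + 42*t^2 - 42*t^4 + 16*t^6 - 2*t^8) * (1 - 8*t^2 + 14*t^4 - 7*t^6 + t^8)" by (simp add: algebra_simps eval_nat_numeral)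
    thus ?thesis using hm k(3) k(6) by simp
  qed
  have r4: "e8_M * (e8_u 4)^2 = (6 + 10*t^2 - 10*t^4 + 2*t^6)"
  proof -
    have "2 * (t^5-5*t^3+5*t) * (t^5-4*t^3+3*t) * ((4 - t^2) * (t^3-2*t)^2) - (6 + 10*t^2 - 10*t^4 + 2*t^6) = (-6 - 58*t^2 + 110*t^4 - 72*t^6 + 20*t^8 - 2*t^10) * (1 - 8*t^2 + 14*t^4 - 7*t^6 + t^8)" by (simp add: algebra_simps eval_nat_numeral)
    thus ?thesis using hm k(3) k(7) by simp
  qed
  have r5: "e8_M * (e8_u 5)^2 = (4 - 4*t^2 + 2*t^4)"
  proof -
    have "2 * (t^5-5*t^3+5*t) * (t^5-4*t^3+3*t) * ((4 - t^2) * (t^4-3*t^2+1)^2) - (4 - 4*t^2 + 2*t^4) = (-4 + 92*t^2 - 240*t^4 + 238*t^6 - 110*t^8 + 24*t^10 - 2*t^12) * (1 - 8*t^2 + 14*t^4 - 7*t^6 + t^8)" by (simp add: algebra_simps eval_nat_numeral)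
    thus ?thesis using hm k(3) k(8) by simp
  qed
  have r6: "e8_M * (e8_u 6)^2 = (-6 + 44*t^2 - 26*t^4 + 4*t^6)"
  proof -
    have "2 * (t^5-5*t^3+5*t) * (t^5-4*t^3+3*t) * t^2 - (-6 + 44*t^2 - 26*t^4 + 4*t^6) * (t^2-1)^2 = (6 - 8*t^2 + 2*t^4) * (1 - 8*t^2 + 14*t^4 - 7*t^6 + t^8)" by (simp add: algebra_simps eval_nat_numeral)
    hence eq: "2 * (t^5-5*t^3+5*t) * (t^5-4*t^3+3*t) * t^2 = (-6 + 44*t^2 - 26*t^4 + 4*t^6) * (t^2-1)^2" using hm by simp
    have "e8_M * (e8_u 6)^2 = 2 * (t^5-5*t^3+5*t) * (t^5-4*t^3+3*t) * t^2 / (t^2-1)^2" by (simp add: k(3) k(9) power_divide)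
    also have "... = (-6 + 44*t^2 - 26*t^4 + 4*t^6)" using eq nz1 nz2 by (simp add: divide_eq_eq)
    finally show ?thesis .
  qed
  have r7: "e8_M * (e8_u 7)^2 = (-4 + 58*t^2 - 38*t^4 + 6*t^6)"
  proof -
    have "2 * (t^5-5*t^3+5*t) * (t^5-4*t^3+3*t) * 1 - (-4 + 58*t^2 - 38*t^4 + 6*t^6) * (t^2-1)^2 = (4 - 4*t^2) * (1 - 8*t^2 + 14*t^4 - 7*t^6 + t^8)" by (simp add: algebra_simps eval_nat_numeral)
    hence eq: "2 * (t^5-5*t^3+5*t) * (t^5-4*t^3+3*t) * 1 = (-4 + 58*t^2 - 38*t^4 + 6*t^6) * (t^2-1)^2" using hm by simp
    have "e8_M * (e8_u 7)^2 = 2 * (t^5-5*t^3+5*t) * (t^5-4*t^3+3*t) / (t^2-1)^2" by (simp add: k(3) k(10) power_divide)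
    also have "... = (-4 + 58*t^2 - 38*t^4 + 6*t^6)" using eq nz1 nz2 by (simp add: divide_eq_eq)
    finally show ?thesis .
  qed
  have r8: "e8_M * (e8_u 8)^2 = (28 - 54*t^2 + 28*t^4 - 4*t^6)"
  proof -
    have "2 * (t^5-5*t^3+5*t) * (t^5-4*t^3+3*t) * 1 - (28 - 54*t^2 + 28*t^4 - 4*t^6) * t^2 = (2*t^2) * (1 - 8*t^2 + 14*t^4 - 7*t^6 + t^8)" by (simp add: algebra_simps eval_nat_numeral)
    hence eq: "2 * (t^5-5*t^3+5*t) * (t^5-4*t^3+3*t) * 1 = (28 - 54*t^2 + 28*t^4 - 4*t^6) * t^2" using hm by simp
    have "e8_M * (e8_u 8)^2 = 2 * (t^5-5*t^3+5*t) * (t^5-4*t^3+3*t) / t^2" by (simp add: k(3) k(11) power_divide)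
    also have "... = (28 - 54*t^2 + 28*t^4 - 4*t^6)" using eq nz1 nz2 by (simp add: divide_eq_eq)
    finally show ?thesis .
  qed
  have va0: "(2 + 8*t^4 - 2*t^6)*(4 - 4*t^2 + 2*t^4)*(-4 + 58*t^2 - 38*t^4 + 6*t^6)*(28 - 54*t^2 + 28*t^4 - 4*t^6) = 720"
  proof -
    have "(2 + 8*t^4 - 2*t^6)*(4 - 4*t^2 + 2*t^4)*(-4 + 58*t^2 - 38*t^4 + 6*t^6)*(28 - 54*t^2 + 28*t^4 - 4*t^6) - 720 = (-1616 + 2688*t^2 - 9088*t^4 + 14416*t^6 - 12224*t^8 + 5488*t^10 - 1184*t^12 + 96*t^14) * (1 - 8*t^2 + 14*t^4 - 7*t^6 + t^8)" by (simp add: algebra_simps eval_nat_numeral)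
    thus ?thesis using hm by simp
  qed
  have va1: "(2 + 8*t^4 - 2*t^6)*(4 - 4*t^2 + 2*t^4)*(-4 + 58*t^2 - 38*t^4 + 6*t^6)+(2 + 8*t^4 - 2*t^6)*(4 - 4*t^2 + 2*t^4)*(28 - 54*t^2 + 28*t^4 - 4*t^6)+(2 + 8*t^4 - 2*t^6)*(-4 + 58*t^2 - 38*t^4 + 6*t^6)*(28 - 54*t^2 + 28*t^4 - 4*t^6)+(4 - 4*t^2 + 2*t^4)*(-4 + 58*t^2 - 38*t^4 + 6*t^6)*(28 - 54*t^2 + 28*t^4 - 4*t^6) = 720"
  proof -
    have "(2 + 8*t^4 - 2*t^6)*(4 - 4*t^2 + 2*t^4)*(-4 + 58*t^2 - 38*t^4 + 6*t^6)+(2 + 8*t^4 - 2*t^6)*(4 - 4*t^2 + 2*t^4)*(28 - 54*t^2 + 28*t^4 - 4*t^6)+(2 + 8*t^4 - 2*t^6)*(-4 + 58*t^2 - 38*t^4 + 6*t^6)*(28 - 54*t^2 + 28*t^4 - 4*t^6)+(4 - 4*t^2 + 2*t^4)*(-4 + 58*t^2 - 38*t^4 + 6*t^6)*(28 - 54*t^2 + 28*t^4 - 4*t^6) - 720 = (-1200 + 1728*t^2 - 2952*t^4 + 2088*t^6 - 552*t^8 + 48*t^10) * (1 - 8*t^2 + 14*t^4 - 7*t^6 + t^8)" by (simp add: algebra_simps eval_nat_numeral)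
    thus ?thesis using hm by simp
  qed
  have va2: "(2 + 8*t^4 - 2*t^6)*(4 - 4*t^2 + 2*t^4)+(2 + 8*t^4 - 2*t^6)*(-4 + 58*t^2 - 38*t^4 + 6*t^6)+(2 + 8*t^4 - 2*t^6)*(28 - 54*t^2 + 28*t^4 - 4*t^6)+(4 - 4*t^2 + 2*t^4)*(-4 + 58*t^2 - 38*t^4 + 6*t^6)+(4 - 4*t^2 + 2*t^4)*(28 - 54*t^2 + 28*t^4 - 4*t^6)+(-4 + 58*t^2 - 38*t^4 + 6*t^6)*(28 - 54*t^2 + 28*t^4 - 4*t^6) = 240"
  proof -
    have "(2 + 8*t^4 - 2*t^6)*(4 - 4*t^2 + 2*t^4)+(2 + 8*t^4 - 2*t^6)*(-4 + 58*t^2 - 38*t^4 + 6*t^6)+(2 + 8*t^4 - 2*t^6)*(28 - 54*t^2 + 28*t^4 - 4*t^6)+(4 - 4*t^2 + 2*t^4)*(-4 + 58*t^2 - 38*t^4 + 6*t^6)+(4 - 4*t^2 + 2*t^4)*(28 - 54*t^2 + 28*t^4 - 4*t^6)+(-4 + 58*t^2 - 38*t^4 + 6*t^6)*(28 - 54*t^2 + 28*t^4 - 4*t^6) - 240 = (-200 + 160*t^2 - 28*t^4) * (1 - 8*t^2 + 14*t^4 - 7*t^6 + t^8)" by (simp add: algebra_simps eval_nat_numeral)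
    thus ?thesis using hm by simp
  qed
  have va3: "(2 + 8*t^4 - 2*t^6)+(4 - 4*t^2 + 2*t^4)+(-4 + 58*t^2 - 38*t^4 + 6*t^6)+(28 - 54*t^2 + 28*t^4 - 4*t^6) = 30"
  proof -
    have "(2 + 8*t^4 - 2*t^6)+(4 - 4*t^2 + 2*t^4)+(-4 + 58*t^2 - 38*t^4 + 6*t^6)+(28 - 54*t^2 + 28*t^4 - 4*t^6) - 30 = 0 * (1 - 8*t^2 + 14*t^4 - 7*t^6 + t^8)" by (simp add: algebra_simps eval_nat_numeral)
    thus ?thesis using hm by simp
  qed
  have vb0: "(16 - 20*t^2 + 12*t^4 - 2*t^6)*(14 - 34*t^2 + 24*t^4 - 4*t^6)*(6 + 10*t^2 - 10*t^4 + 2*t^6)*(-6 + 44*t^2 - 26*t^4 + 4*t^6) = 720"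
  proof -
    have "(16 - 20*t^2 + 12*t^4 - 2*t^6)*(14 - 34*t^2 + 24*t^4 - 4*t^6)*(6 + 10*t^2 - 10*t^4 + 2*t^6)*(-6 + 44*t^2 - 26*t^4 + 4*t^6) - 720 = (-8784 + 5088*t^2 + 28288*t^4 - 57376*t^6 + 51376*t^8 - 25456*t^10 + 7136*t^12 - 1056*t^14 + 64*t^16) * (1 - 8*t^2 + 14*t^4 - 7*t^6 + t^8)" by (simp add: algebra_simps eval_nat_numeral)
    thus ?thesis using hm by simp
  qed
  have vb1: "(16 - 20*t^2 + 12*t^4 - 2*t^6)*(14 - 34*t^2 + 24*t^4 - 4*t^6)*(6 + 10*t^2 - 10*t^4 + 2*t^6)+(16 - 20*t^2 + 12*t^4 - 2*t^6)*(14 - 34*t^2 + 24*t^4 - 4*t^6)*(-6 + 44*t^2 - 26*t^4 + 4*t^6)+(16 - 20*t^2 + 12*t^4 - 2*t^6)*(6 + 10*t^2 - 10*t^4 + 2*t^6)*(-6 + 44*t^2 - 26*t^4 + 4*t^6)+(14 - 34*t^2 + 24*t^4 - 4*t^6)*(6 + 10*t^2 - 10*t^4 + 2*t^6)*(-6 + 44*t^2 - 26*t^4 + 4*t^6) = 1080"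
  proof -
    have "(16 - 20*t^2 + 12*t^4 - 2*t^6)*(14 - 34*t^2 + 24*t^4 - 4*t^6)*(6 + 10*t^2 - 10*t^4 + 2*t^6)+(16 - 20*t^2 + 12*t^4 - 2*t^6)*(14 - 34*t^2 + 24*t^4 - 4*t^6)*(-6 + 44*t^2 - 26*t^4 + 4*t^6)+(16 - 20*t^2 + 12*t^4 - 2*t^6)*(6 + 10*t^2 - 10*t^4 + 2*t^6)*(-6 + 44*t^2 - 26*t^4 + 4*t^6)+(14 - 34*t^2 + 24*t^4 - 4*t^6)*(6 + 10*t^2 - 10*t^4 + 2*t^6)*(-6 + 44*t^2 - 26*t^4 + 4*t^6) - 1080 = (-2160 + 2880*t^2 - 1272*t^4 + 264*t^6 - 24*t^8) * (1 - 8*t^2 + 14*t^4 - 7*t^6 + t^8)" by (simp add: algebra_simps eval_nat_numeral)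
    thus ?thesis using hm by simp
  qed
  have vb2: "(16 - 20*t^2 + 12*t^4 - 2*t^6)*(14 - 34*t^2 + 24*t^4 - 4*t^6)+(16 - 20*t^2 + 12*t^4 - 2*t^6)*(6 + 10*t^2 - 10*t^4 + 2*t^6)+(16 - 20*t^2 + 12*t^4 - 2*t^6)*(-6 + 44*t^2 - 26*t^4 + 4*t^6)+(14 - 34*t^2 + 24*t^4 - 4*t^6)*(6 + 10*t^2 - 10*t^4 + 2*t^6)+(14 - 34*t^2 + 24*t^4 - 4*t^6)*(-6 + 44*t^2 - 26*t^4 + 4*t^6)+(6 + 10*t^2 - 10*t^4 + 2*t^6)*(-6 + 44*t^2 - 26*t^4 + 4*t^6) = 300"
  proof -
    have "(16 - 20*t^2 + 12*t^4 - 2*t^6)*(14 - 34*t^2 + 24*t^4 - 4*t^6)+(16 - 20*t^2 + 12*t^4 - 2*t^6)*(6 + 10*t^2 - 10*t^4 + 2*t^6)+(16 - 20*t^2 + 12*t^4 - 2*t^6)*(-6 + 44*t^2 - 26*t^4 + 4*t^6)+(14 - 34*t^2 + 24*t^4 - 4*t^6)*(6 + 10*t^2 - 10*t^4 + 2*t^6)+(14 - 34*t^2 + 24*t^4 - 4*t^6)*(-6 + 44*t^2 - 26*t^4 + 4*t^6)+(6 + 10*t^2 - 10*t^4 + 2*t^6)*(-6 + 44*t^2 - 26*t^4 + 4*t^6) - 300 = (-112 + 104*t^2 - 20*t^4) * (1 - 8*t^2 + 14*t^4 - 7*t^6 + t^8)" by (simp add: algebra_simps eval_nat_numeral)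
    thus ?thesis using hm by simp
  qed
  have vb3: "(16 - 20*t^2 + 12*t^4 - 2*t^6)+(14 - 34*t^2 + 24*t^4 - 4*t^6)+(6 + 10*t^2 - 10*t^4 + 2*t^6)+(-6 + 44*t^2 - 26*t^4 + 4*t^6) = 30"
  proof -
    have "(16 - 20*t^2 + 12*t^4 - 2*t^6)+(14 - 34*t^2 + 24*t^4 - 4*t^6)+(6 + 10*t^2 - 10*t^4 + 2*t^6)+(-6 + 44*t^2 - 26*t^4 + 4*t^6) - 30 = 0 * (1 - 8*t^2 + 14*t^4 - 7*t^6 + t^8)" by (simp add: algebra_simps eval_nat_numeral)
    thus ?thesis using hm by simp
  qed
  have g1: "\<And>f. (\<Prod>j\<in>{2,5,7,8::nat}. f j) = f 2 * (f 5 * (f 7 * f 8))" by simp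
  have g2: "\<And>f. (\<Prod>j\<in>{1,3,4,6::nat}. f j) = f 1 * (f 3 * (f 4 * f 6))" by simp
  have A: "e8_P1 = (\<Prod>j\<in>{2,5,7,8}. [:- (e8_M * (e8_u j)^2), 1:])"
    unfolding e8_P1_def g1 r2 r5 r7 r8 by (rule prod4'[OF va0 va1 va2 va3, symmetric])
  have B: "e8_P2 = (\<Prod>j\<in>{1,3,4,6}. [:- (e8_M * (e8_u j)^2), 1:])"
    unfolding e8_P2_def g2 r1 r3 r4 r6 by (rule prod4'[OF vb0 vb1 vb2 vb3, symmetric])
  have C: "e8_P = e8_P1 * e8_P2"
    by (simp add: e8_P_def e8_P1_def e8_P2_def)
  have setq: "{1..8::nat} = {2,5,7,8} \<union> {1,3,4,6}" by auto
  have D: "e8_P = (\<Prod>j\<in>{1..8}. [:- (e8_M * (e8_u j)^2), 1:])"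
    unfolding C A B setq by (subst prod.union_disjoint) auto
  have E: "{x. poly e8_P x = 0} = (\<lambda>j. e8_M * (e8_u j)^2) ` {1..8}"
    unfolding D by (auto simp: poly_prod)
  show ?thesis using A B C D E by blast
qed

end
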